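(* Let $P$ be a continuous $L$-ordered set. Then $({\rm pt}_L\sigma_L(P),{\rm sub}_{\sigma_L(P)})$, together with the map $\eta_P:P\to{\rm pt}_L\sigma_L(P)$, $x\mapsto[x]$, is a directed completion of $P$.
   Context: $L$ is a frame with implication $\to$. $L$-subsets of $X$ are maps $X\to L$; nonempty means $\bigvee_xA(x)=1$; ${\rm sub}_X(A,B)=\bigwedge_xA(x)\to B(x)$; $f^\rightarrow(A)(y)=\bigvee_{f(x)=y}A(x)$. An $L$-order on $P$: $e:P\times P\to L$ with $e(x,x)=1$, $e(x,y)\wedge e(y,z)\le e(x,z)$, $e(x,y)\wedge e(y,x)=1\Rightarrow x=y$. ${\downarrow}y(x)=e(x,y)$. $x=\sqcup A$ if $e(x,y)={\rm sub}_P(A,{\downarrow}y)$ for all $y$. Directed: nonempty and $D(x)\wedge D(y)\le\bigvee_zD(z)\wedge e(x,z)\wedge e(y,z)$; ideal = directed lower set. $L$-dcpo: every directed $L$-subset has a supremum. Scott continuous $f$: for each directed $D$ with a supremum, $f^\rightarrow(D)$ has a supremum equal to $f(\sqcup D)$. ${\Downarrow}x(y)=\bigwedge\{e(x,\sqcup I)\to I(y): I\text{ ideal with a supremum}\}$; $P$ is a continuous $L$-ordered set if each ${\Downarrow}x$ is directed with supremum $x$; a continuous $L$-dcpo is a continuous $L$-ordered set that is an $L$-dcpo. $\sigma_L(P)$ (Scott $L$-topology) is the set of $A\in L^P$ that are upper sets ($A(x)\wedge e(x,y)\le A(y)$) with $A(\sqcup D)=\bigvee_xA(x)\wedge D(x)$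 for every directed $D$ having a supremum. ${\rm pt}_L\sigma_L(P)$ is the set of maps $p:\sigma_L(P)\to L$ preserving binary meets and arbitrary joins and with $p(\lambda_P)=\lambda$ for every constant $\lambda_P$; it is $L$-ordered by ${\rm sub}_{\sigma_L(P)}(p,q)=\bigwedge_{A\in\sigma_L(P)}p(A)\to q(A)$. $[x](A)=A(x)$. A directed completion of a continuous $L$-ordered set $P$ is a continuous $L$-dcpo $Q$ with a Scott continuous $j:P\to Q$ such that for every continuous $L$-dcpo $M$ and Scott continuous $f:P\to M$ there is a unique Scott continuous $\bar f:Q\to M$ with $\bar f\circ j=f$. *)

theory Defs
  imports Main
begin

class frame = complete_lattice +
  assumes inf_Sup_frame: "inf a (Sup S) = Sup ((\<lambda>b. inf a b) ` S)"

definition limp :: "'l::frame \<Rightarrow> 'l \<Rightarrow> 'l" where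
  "limp a b = Sup {c. inf c a \<le> b}"

definition Lnonempty :: "'a set \<Rightarrow> ('a \<Rightarrow> 'l::frame) \<Rightarrow> bool" where
  "Lnonempty X A \<longleftrightarrow> (SUP x\<in>X. A x) = top"

definition Lsub :: "'a set \<Rightarrow> ('a \<Rightarrow> 'l::frame) \<Rightarrow> ('a \<Rightarrow> 'l) \<Rightarrow> 'l" where
  "Lsub X A B = (INF x\<in>X. limp (A x) (B x))"

definition Limg :: "'a set \<Rightarrow> ('a \<Rightarrow> 'b) \<Rightarrow> ('a \<Rightarrow> 'l::frame) \<Rightarrow> 'b \<Rightarrow> 'l" where
  "Limg X f A y = (SUP x\<in>{x\<in>X. f x = y}. A x)"

definition Lorder :: "'a set \<Rightarrow> ('a \<Rightarrow> 'a \<Rightarrow> 'l::frame) \<Rightarrow> bool" where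
  "Lorder X e \<longleftrightarrow>
     (\<forall>x\<in>X. e x x = top) \<and>
     (\<forall>x\<in>X. \<forall>y\<in>X. \<forall>z\<in>X. inf (e x y) (e y z) \<le> e x z) \<and>
     (\<forall>x\<in>X. \<forall>y\<in>X. inf (e x y) (e y x) = top \<longrightarrow> x = y)"

definition Ldown :: "('a \<Rightarrow> 'a \<Rightarrow> 'l::frame) \<Rightarrow> 'a \<Rightarrow> 'a \<Rightarrow> 'l" where
  "Ldown e y = (\<lambda>x. e x y)"

definition is_Lsup :: "'a set \<Rightarrow> ('a \<Rightarrow> 'a \<Rightarrow> 'l::frame) \<Rightarrow> ('a \<Rightarrow> 'l) \<Rightarrow> 'a \<Rightarrow> bool" where
  "is_Lsup X e A x \<longleftrightarrow> x \<in> X \<and> (\<forall>y\<in>X. e x y = Lsub X A (Ldown e y))"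

definition Ldirected :: "'a set \<Rightarrow> ('a \<Rightarrow> 'a \<Rightarrow> 'l::frame) \<Rightarrow> ('a \<Rightarrow> 'l) \<Rightarrow> bool" where
  "Ldirected X e D \<longleftrightarrow> Lnonempty X D \<and>
     (\<forall>x\<in>X. \<forall>y\<in>X. inf (D x) (D y) \<le> (SUP z\<in>X. inf (D z) (inf (e x z) (e y z))))"

definition Llower :: "'a set \<Rightarrow> ('a \<Rightarrow> 'a \<Rightarrow> 'l::frame) \<Rightarrow> ('a \<Rightarrow> 'l) \<Rightarrow> bool" where
  "Llower X e A \<longleftrightarrow> (\<forall>x\<in>X. \<forall>y\<in>X. inf (A x) (e y x) \<le> A y)"

definition Lupper :: "'a set \<Rightarrow> ('a \<Rightarrow> 'a \<Rightarrow> 'l::frame) \<Rightarrow> ('a \<Rightarrow> 'l) \<Rightarrow> bool" where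
  "Lupper X e A \<longleftrightarrow> (\<forall>x\<in>X. \<forall>y\<in>X. inf (A x) (e x y) \<le> A y)"

definition Lideal :: "'a set \<Rightarrow> ('a \<Rightarrow> 'a \<Rightarrow> 'l::frame) \<Rightarrow> ('a \<Rightarrow> 'l) \<Rightarrow> bool" where
  "Lideal X e I \<longleftrightarrow> Ldirected X e I \<and> Llower X e I"

definition Ldcpo :: "'a set \<Rightarrow> ('a \<Rightarrow> 'a \<Rightarrow> 'l::frame) \<Rightarrow> bool" where
  "Ldcpo X e \<longleftrightarrow> Lorder X e \<and> (\<forall>D. Ldirected X e D \<longrightarrow> (\<exists>x. is_Lsup X e D x))"

definition scott_cont ::
  "'a set \<Rightarrow> ('a \<Rightarrow> 'a \<Rightarrow> 'l::frame) \<Rightarrow> 'b set \<Rightarrow> ('b \<Rightarrow> 'b \<Rightarrow> 'l) \<Rightarrow> ('a \<Rightarrow> 'b) \<Rightarrow> bool" where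
  "scott_cont X e Y e' f \<longleftrightarrow> (\<forall>x\<in>X. f x \<in> Y) \<and>
     (\<forall>D s. Ldirected X e D \<and> is_Lsup X e D s \<longrightarrow> is_Lsup Y e' (Limg X f D) (f s))"

definition Lwaybelow :: "'a set \<Rightarrow> ('a \<Rightarrow> 'a \<Rightarrow> 'l::frame) \<Rightarrow> 'a \<Rightarrow> 'a \<Rightarrow> 'l" where
  "Lwaybelow X e x y = Inf {limp (e x s) (I y) | I s. Lideal X e I \<and> is_Lsup X e I s}"

definition cont_Lordered :: "'a set \<Rightarrow> ('a \<Rightarrow> 'a \<Rightarrow> 'l::frame) \<Rightarrow> bool" where
  "cont_Lordered X e \<longleftrightarrow> Lorder X e \<and>
     (\<forall>x\<in>X. Ldirected X e (Lwaybelow X e x) \<and> is_Lsup X e (Lwaybelow X e x) x)"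

definition cont_Ldcpo :: "'a set \<Rightarrow> ('a \<Rightarrow> 'a \<Rightarrow> 'l::frame) \<Rightarrow> bool" where
  "cont_Ldcpo X e \<longleftrightarrow> cont_Lordered X e \<and> Ldcpo X e"

text \<open>L-subsets of X are represented by functions that are bottom outside X.\<close>
definition sigmaL :: "'a set \<Rightarrow> ('a \<Rightarrow> 'a \<Rightarrow> 'l::frame) \<Rightarrow> ('a \<Rightarrow> 'l) set" where
  "sigmaL X e = {A. (\<forall>x. x \<notin> X \<longrightarrow> A x = bot) \<and> Lupper X e A \<and>
     (\<forall>D s. Ldirected X e D \<and> is_Lsup X e D s \<longrightarrow> A s = (SUP x\<in>X. inf (A x) (D x)))}"

definition const_on :: "'a set \<Rightarrow> 'l::frame \<Rightarrow> 'a \<Rightarrow> 'l" where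
  "const_on X c = (\<lambda>x. if x \<in> X then c else bot)"

definition ptL :: "'a set \<Rightarrow> ('a \<Rightarrow> 'a \<Rightarrow> 'l::frame) \<Rightarrow> (('a \<Rightarrow> 'l) \<Rightarrow> 'l) set" where
  "ptL X e = {p. (\<forall>A. A \<notin> sigmaL X e \<longrightarrow> p A = bot) \<and>
     (\<forall>A\<in>sigmaL X e. \<forall>B\<in>sigmaL X e. p (inf A B) = inf (p A) (p B)) \<and>
     (\<forall>S. S \<subseteq> sigmaL X e \<longrightarrow> p (Sup S) = Sup (p ` S)) \<and>
     (\<forall>c. p (const_on X c) = c)}"

definition subPt :: "'a set \<Rightarrow> ('a \<Rightarrow> 'a \<Rightarrow> 'l::frame) \<Rightarrow>
    (('a \<Rightarrow> 'l) \<Rightarrow> 'l) \<Rightarrow> (('a \<Rightarrow> 'l) \<Rightarrow> 'l) \<Rightarrow> 'l" where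
  "subPt X e p q = (INF A\<in>sigmaL X e. limp (p A) (q A))"

definition etaP :: "'a set \<Rightarrow> ('a \<Rightarrow> 'a \<Rightarrow> 'l::frame) \<Rightarrow> 'a \<Rightarrow> ('a \<Rightarrow> 'l) \<Rightarrow> 'l" where
  "etaP X e x = (\<lambda>A. if A \<in> sigmaL X e then A x else bot)"

text \<open>Universal property, with target continuous L-dcpos ranging over carriers in type 'm.
  The theorem is stated for an arbitrary (schematic) type 'm, i.e. for all continuous L-dcpos.\<close>
definition directed_completion ::
  "'a set \<Rightarrow> ('a \<Rightarrow> 'a \<Rightarrow> 'l::frame) \<Rightarrow> 'q set \<Rightarrow> ('q \<Rightarrow> 'q \<Rightarrow> 'l) \<Rightarrow> ('a \<Rightarrow> 'q) \<Rightarrow> 'm itself \<Rightarrow> bool" where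
  "directed_completion X e Q eQ j _ \<longleftrightarrow>
     cont_Ldcpo Q eQ \<and> scott_cont X e Q eQ j \<and>
     (\<forall>(M::'m set) (eM :: 'm \<Rightarrow> 'm \<Rightarrow> 'l) f.
        cont_Ldcpo M eM \<and> scott_cont X e M eM f \<longrightarrow>
        (\<exists>g. scott_cont Q eQ M eM g \<and> (\<forall>x\<in>X. g (j x) = f x) \<and>
           (\<forall>h. scott_cont Q eQ M eM h \<and> (\<forall>x\<in>X. h (j x) = f x) \<longrightarrow> (\<forall>q\<in>Q. h q = g q))))"

end

theory Submission
  imports Defs
begin


lemma limp_iff: "(c::'l::frame) \<le> limp a b \<longleftrightarrow> inf c a \<le> b"
proof
  assume "c \<le> limp a b"
  hence "inf c a \<le> inf (limp a b) a" by (rule inf_mono) simp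
  also have "inf (limp a b) a = inf a (limp a b)" by (simp add: inf_commute)
  also have "\<dots> = Sup ((\<lambda>d. inf a d) ` {d. inf d a \<le> b})" unfolding limp_def by (rule inf_Sup_frame)
  also have "\<dots> \<le> b" by (auto intro!: Sup_least simp: inf_commute)
  finally show "inf c a \<le> b" .
next
  assume "inf c a \<le> b" thus "c \<le> limp a b" unfolding limp_def by (auto intro: Sup_upper)
qed

lemma limpI: "inf (c::'l::frame) a \<le> b \<Longrightarrow> c \<le> limp a b" by (simp add: limp_iff)

lemma limp_mp: "inf (limp a b) (a::'l::frame) \<le> b" by (simp add: limp_iff[symmetric])
lemma limp_mp2: "inf (a::'l::frame) (limp a b) \<le> b" using limp_mp by (metis inf_commute)

lemma limp_top_left[simp]: "limp top (b::'l::frame) = b"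
  by (rule antisym) (metis inf_top_right limp_mp, simp add: limp_iff)

lemma limp_self[simp]: "limp (a::'l::frame) a = top"
  by (rule order_antisym[OF top_greatest]) (rule limpI, simp)

lemma limp_top_iff: "limp (a::'l::frame) b = top \<longleftrightarrow> a \<le> b"
  by (metis inf_top_left limp_iff top_unique order_refl)

lemma fr_inf_SUP: "inf (a::'l::frame) (SUP i\<in>I. f i) = (SUP i\<in>I. inf a (f i))"
  by (simp add: inf_Sup_frame image_comp)

lemma fr_SUP_inf: "inf (SUP i\<in>I. f i) (a::'l::frame) = (SUP i\<in>I. inf (f i) a)"
  using fr_inf_SUP[of a f I] by (simp add: inf_commute)

lemma limp_SUP: "limp (SUP i\<in>I. f i) (b::'l::frame) = (INF i\<in>I. limp (f i) b)"
proof (rule antisym)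
  show "limp (SUP i\<in>I. f i) b \<le> (INF i\<in>I. limp (f i) b)"
    by (auto intro!: INF_greatest limpI intro: order_trans[OF _ limp_mp] inf_mono SUP_upper)
  have "inf (INF i\<in>I. limp (f i) b) (SUP i\<in>I. f i) \<le> b"
    unfolding fr_inf_SUP
    by (auto intro!: SUP_least intro: order_trans[OF _ limp_mp[of "f _" b]] inf_mono INF_lower)
  thus "(INF i\<in>I. limp (f i) b) \<le> limp (SUP i\<in>I. f i) b" by (rule limpI)
qed

lemma limp_INF: "limp a (INF i\<in>I. f i) = (INF i\<in>I. limp (a::'l::frame) (f i))"
proof (rule antisym)
  show "limp a (INF i\<in>I. f i) \<le> (INF i\<in>I. limp a (f i))"
    by (auto intro!: INF_greatest limpI intro: order_trans[OF limp_mp] INF_lower)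
  show "(INF i\<in>I. limp a (f i)) \<le> limp a (INF i\<in>I. f i)"
  proof (rule limpI, rule INF_greatest)
    fix i assume "i \<in> I"
    hence "inf (INF i\<in>I. limp a (f i)) a \<le> inf (limp a (f i)) a" by (intro inf_mono INF_lower) auto
    also have "\<dots> \<le> f i" by (rule limp_mp)
    finally show "inf (INF i\<in>I. limp a (f i)) a \<le> f i" .
  qed
qed

lemma limp_inf: "limp (inf a b) c = limp (a::'l::frame) (limp b c)"
proof (rule order_antisym)
  show "limp (inf a b) c \<le> limp a (limp b c)" by (simp add: limp_iff inf_assoc limp_mp)
  have "inf (limp a (limp b c)) (inf a b) = inf (inf (limp a (limp b c)) a) b" by (simp add: inf_assoc)
  also have "\<dots> \<le> inf (limp b c) b" by (intro inf_mono limp_mp order_refl)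
  also have "\<dots> \<le> c" by (rule limp_mp)
  finally show "limp a (limp b c) \<le> limp (inf a b) c" by (rule limpI)
qed

lemma limp_mono: "a' \<le> a \<Longrightarrow> b \<le> b' \<Longrightarrow> limp a b \<le> limp (a'::'l::frame) b'"
  by (rule limpI) (meson inf_mono limp_mp order.trans order_refl)


lemma limp_le_top: "a \<le> b \<Longrightarrow> limp a (b::'l::frame) = top" by (simp add: limp_top_iff)

lemma top_le_limp: "top \<le> limp a (b::'l::frame) \<Longrightarrow> a \<le> b"
  using limp_top_iff top_unique by metis

lemma Lorder_refl: "Lorder X e \<Longrightarrow> x \<in> X \<Longrightarrow> e x x = top"
  by (simp add: Lorder_def)
lemma Lorder_trans: "Lorder X e \<Longrightarrow> x \<in> X \<Longrightarrow> y \<in> X \<Longrightarrow> z \<in> X \<Longrightarrow> inf (e x y) (e y z) \<le> e x z"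
  by (simp add: Lorder_def)
lemma Lorder_antisym: "Lorder X e \<Longrightarrow> x \<in> X \<Longrightarrow> y \<in> X \<Longrightarrow> e x y = top \<Longrightarrow> e y x = top \<Longrightarrow> x = y"
  unfolding Lorder_def by auto

lemma is_Lsup_iff: "is_Lsup X e A s \<longleftrightarrow> s \<in> X \<and> (\<forall>y\<in>X. e s y = (INF x\<in>X. limp (A x) (e x y)))"
  by (simp add: is_Lsup_def Lsub_def Ldown_def)

lemma Lsup_upper:
  assumes "Lorder X e" "is_Lsup X e A s" "x \<in> X"
  shows "A x \<le> e x s"
proof -
  have s: "s \<in> X" using assms(2) by (simp add: is_Lsup_iff)
  have "top = e s s" using Lorder_refl[OF assms(1) s] by simp
  also have "\<dots> = (INF x\<in>X. limp (A x) (e x s))" using assms(2) s by (simp add: is_Lsup_iff)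
  also have "\<dots> \<le> limp (A x) (e x s)" using assms(3) by (rule INF_lower)
  finally show ?thesis by (rule top_le_limp)
qed

lemma is_LsupI:
  assumes "Lorder X e" "s \<in> X" "\<And>x. x \<in> X \<Longrightarrow> A x \<le> e x s"
    "\<And>y. y \<in> X \<Longrightarrow> (INF x\<in>X. limp (A x) (e x y)) \<le> e s y"
  shows "is_Lsup X e A s"
  unfolding is_Lsup_iff
proof (intro conjI ballI assms(2) order_antisym assms(4))
  fix y assume y: "y \<in> X"
  show "e s y \<le> (INF x\<in>X. limp (A x) (e x y))"
  proof (rule INF_greatest, rule limpI)
    fix x assume x: "x \<in> X"
    have "inf (e s y) (A x) \<le> inf (e x s) (e s y)" using assms(3)[OF x] by (simp add: inf_commute le_infI1)
    also have "\<dots> \<le> e x y" using Lorder_trans[OF assms(1) x assms(2) y] .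
    finally show "inf (e s y) (A x) \<le> e x y" .
  qed
qed

lemma Lorder_eq_char:
  assumes "Lorder X e" "s \<in> X" "t \<in> X" "\<And>y. y \<in> X \<Longrightarrow> e s y = e t y"
  shows "s = t"
  using assms Lorder_antisym[OF assms(1-3)] Lorder_refl[OF assms(1)] by metis

lemma Lsup_unique:
  assumes "Lorder X e" "is_Lsup X e A s" "is_Lsup X e A t"
  shows "s = t"
  using assms by (intro Lorder_eq_char[OF assms(1)]) (auto simp: is_Lsup_iff)

lemma Ldirected_cong: "Ldirected X e D \<Longrightarrow> (\<And>x. x \<in> X \<Longrightarrow> D x = D' x) \<Longrightarrow> Ldirected X e D'"
  unfolding Ldirected_def Lnonempty_def by (auto cong: SUP_cong)

lemma is_Lsup_cong: "is_Lsup X e D s \<Longrightarrow> (\<And>x. x \<in> X \<Longrightarrow> D x = D' x) \<Longrightarrow> is_Lsup X e D' s"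
  unfolding is_Lsup_iff by (auto cong: INF_cong)

lemma Llower_cong: "Llower X e D \<Longrightarrow> (\<And>x. x \<in> X \<Longrightarrow> D x = D' x) \<Longrightarrow> Llower X e D'"
  unfolding Llower_def by auto

section \<open>Images\<close>

lemma Lsub_Limg:
  assumes "\<And>x. x \<in> X \<Longrightarrow> f x \<in> Y"
  shows "Lsub Y (Limg X f D) B = (INF x\<in>X. limp (D x) (B (f x)))"
proof -
  have "Lsub Y (Limg X f D) B = (INF y\<in>Y. INF x\<in>{x\<in>X. f x = y}. limp (D x) (B y))"
    unfolding Lsub_def Limg_def limp_SUP ..
  also have "\<dots> = (INF x\<in>X. limp (D x) (B (f x)))"
  proof (rule order_antisym)
    show "(INF y\<in>Y. INF x\<in>{x\<in>X. f x = y}. limp (D x) (B y)) \<le> (INF x\<in>X. limp (D x) (B (f x)))"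
    proof (rule INF_greatest)
      fix x assume x: "x \<in> X"
      have "(INF y\<in>Y. INF x\<in>{x\<in>X. f x = y}. limp (D x) (B y)) \<le> (INF x'\<in>{x'\<in>X. f x' = f x}. limp (D x') (B (f x)))"
        using assms[OF x] by (rule INF_lower)
      also have "\<dots> \<le> limp (D x) (B (f x))" using x by (intro INF_lower) auto
      finally show "(INF y\<in>Y. INF x\<in>{x\<in>X. f x = y}. limp (D x) (B y)) \<le> limp (D x) (B (f x))" .
    qed
    show "(INF x\<in>X. limp (D x) (B (f x))) \<le> (INF y\<in>Y. INF x\<in>{x\<in>X. f x = y}. limp (D x) (B y))"
      by (auto intro!: INF_greatest INF_lower)
  qed
  finally show ?thesis .
qed

lemma is_Lsup_Limg:
  assumes "\<And>x. x \<in> X \<Longrightarrow> f x \<in> Y"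
  shows "is_Lsup Y e' (Limg X f D) s \<longleftrightarrow> s \<in> Y \<and> (\<forall>y\<in>Y. e' s y = (INF x\<in>X. limp (D x) (e' (f x) y)))"
proof -
  have "Lsub Y (Limg X f D) B = (INF x\<in>X. limp (D x) (B (f x)))" for B
    using assms by (rule Lsub_Limg)
  thus ?thesis unfolding is_Lsup_def Ldown_def by simp
qed

lemma Limg_ge: "x \<in> X \<Longrightarrow> D x \<le> Limg X f D (f x)"
  unfolding Limg_def by (rule SUP_upper) auto

lemma SUP_Limg:
  assumes "\<And>x. x \<in> X \<Longrightarrow> f x \<in> Y"
  shows "(SUP y\<in>Y. inf (Limg X f D y) (B y)) = (SUP x\<in>X. inf (D x) (B (f x)))"
proof (rule order_antisym)
  show "(SUP y\<in>Y. inf (Limg X f D y) (B y)) \<le> (SUP x\<in>X. inf (D x) (B (f x)))"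
    unfolding Limg_def fr_SUP_inf by (auto intro!: SUP_least intro: SUP_upper)
  show "(SUP x\<in>X. inf (D x) (B (f x))) \<le> (SUP y\<in>Y. inf (Limg X f D y) (B y))"
  proof (rule SUP_least)
    fix x assume x: "x \<in> X"
    have "inf (D x) (B (f x)) \<le> inf (Limg X f D (f x)) (B (f x))"
      using Limg_ge[OF x] by (rule inf_mono) simp
    also have "\<dots> \<le> (SUP y\<in>Y. inf (Limg X f D y) (B y))" using assms[OF x] by (rule SUP_upper)
    finally show "inf (D x) (B (f x)) \<le> (SUP y\<in>Y. inf (Limg X f D y) (B y))" .
  qed
qed

lemma Ldirected_Limg:
  assumes f: "\<And>x. x \<in> X \<Longrightarrow> f x \<in> Y"
    and mono: "\<And>x y. x \<in> X \<Longrightarrow> y \<in> X \<Longrightarrow> e x y \<le> e' (f x) (f y)"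
    and D: "Ldirected X e D"
  shows "Ldirected Y e' (Limg X f D)"
  unfolding Ldirected_def Lnonempty_def
proof (intro conjI ballI)
  have "top = (SUP x\<in>X. D x)" using D by (simp add: Ldirected_def Lnonempty_def)
  also have "\<dots> \<le> (SUP y\<in>Y. Limg X f D y)"
    by (rule SUP_least, rule order_trans[OF Limg_ge], assumption, rule SUP_upper, rule f)
  finally show "(SUP y\<in>Y. Limg X f D y) = top" by (simp add: top_unique)
next
  fix m1 m2 assume m: "m1 \<in> Y" "m2 \<in> Y"
  let ?R = "SUP m\<in>Y. inf (Limg X f D m) (inf (e' m1 m) (e' m2 m))"
  have "inf (D x1) (D x2) \<le> ?R" if x: "x1 \<in> X" "x2 \<in> X" "f x1 = m1" "f x2 = m2" for x1 x2
  proof -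
    have "inf (D x1) (D x2) \<le> (SUP z\<in>X. inf (D z) (inf (e x1 z) (e x2 z)))"
      using D x by (simp add: Ldirected_def)
    also have "\<dots> \<le> ?R"
    proof (rule SUP_least)
      fix z assume z: "z \<in> X"
      have "inf (D z) (inf (e x1 z) (e x2 z)) \<le> inf (Limg X f D (f z)) (inf (e' m1 (f z)) (e' m2 (f z)))"
        using Limg_ge[OF z, of D f] mono[OF x(1) z] mono[OF x(2) z] x(3,4)
        by (intro inf_mono) auto
      also have "\<dots> \<le> ?R" using f[OF z] by (rule SUP_upper)
      finally show "inf (D z) (inf (e x1 z) (e x2 z)) \<le> ?R" .
    qed
    finally show ?thesis .
  qed
  thus "inf (Limg X f D m1) (Limg X f D m2) \<le> ?R"
    unfolding Limg_def fr_SUP_inf fr_inf_SUP by (auto intro!: SUP_least)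
qed


lemma gen_ideal:
  assumes ord: "Lorder Y e" and D: "Ldirected Y e D" and s: "is_Lsup Y e D s"
  defines "I \<equiv> \<lambda>z. SUP y\<in>Y. inf (D y) (e z y)"
  shows "Lideal Y e I \<and> is_Lsup Y e I s"
proof -
  have DI: "D y \<le> I y" if y: "y \<in> Y" for y
  proof -
    have "D y = inf (D y) (e y y)" using Lorder_refl[OF ord y] by simp
    also have "\<dots> \<le> I y" unfolding I_def using y by (rule SUP_upper)
    finally show ?thesis .
  qed
  have sY: "s \<in> Y" using s by (simp add: is_Lsup_iff)
  have ne: "Lnonempty Y I"
  proof -
    have "top = (SUP y\<in>Y. D y)" using D by (simp add: Ldirected_def Lnonempty_def)
    also have "\<dots> \<le> (SUP y\<in>Y. I y)" by (rule SUP_mono) (use DI in auto)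
    finally show ?thesis by (simp add: Lnonempty_def top_unique)
  qed
  have dir: "inf (I z1) (I z2) \<le> (SUP c\<in>Y. inf (I c) (inf (e z1 c) (e z2 c)))"
    if z: "z1 \<in> Y" "z2 \<in> Y" for z1 z2
  proof -
    let ?R = "SUP c\<in>Y. inf (I c) (inf (e z1 c) (e z2 c))"
    have "inf (inf (D a1) (e z1 a1)) (inf (D a2) (e z2 a2)) \<le> ?R" if a: "a1 \<in> Y" "a2 \<in> Y" for a1 a2
    proof -
      have "inf (inf (D a1) (e z1 a1)) (inf (D a2) (e z2 a2)) = inf (inf (D a1) (D a2)) (inf (e z1 a1) (e z2 a2))"
        by (simp add: inf_aci)
      also have "\<dots> \<le> inf (SUP c\<in>Y. inf (D c) (inf (e a1 c) (e a2 c))) (inf (e z1 a1) (e z2 a2))"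
        using D a by (intro inf_mono) (auto simp: Ldirected_def)
      also have "\<dots> = (SUP c\<in>Y. inf (inf (D c) (inf (e a1 c) (e a2 c))) (inf (e z1 a1) (e z2 a2)))"
        by (rule fr_SUP_inf)
      also have "\<dots> \<le> ?R"
      proof (rule SUP_mono)
        fix c assume c: "c \<in> Y"
        have "inf (inf (D c) (inf (e a1 c) (e a2 c))) (inf (e z1 a1) (e z2 a2))
              = inf (D c) (inf (inf (e z1 a1) (e a1 c)) (inf (e z2 a2) (e a2 c)))" by (simp add: inf_aci)
        also have "\<dots> \<le> inf (I c) (inf (e z1 c) (e z2 c))"
          using DI[OF c] Lorder_trans[OF ord z(1) a(1) c] Lorder_trans[OF ord z(2) a(2) c]
          by (intro inf_mono) auto
        finally show "\<exists>c'\<in>Y. inf (inf (D c) (inf (e a1 c) (e a2 c))) (inf (e z1 a1) (e z2 a2))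
              \<le> inf (I c') (inf (e z1 c') (e z2 c'))" using c by blast
      qed
      finally show ?thesis .
    qed
    thus ?thesis unfolding I_def fr_SUP_inf fr_inf_SUP by (auto intro!: SUP_least)
  qed
  have low: "Llower Y e I" unfolding Llower_def
  proof (intro ballI)
    fix z z' assume z: "z \<in> Y" "z' \<in> Y"
    show "inf (I z) (e z' z) \<le> I z'" unfolding I_def fr_SUP_inf
    proof (rule SUP_mono)
      fix y assume y: "y \<in> Y"
      have "inf (inf (D y) (e z y)) (e z' z) \<le> inf (D y) (e z' y)"
      proof -
        have "inf (inf (D y) (e z y)) (e z' z) = inf (D y) (inf (e z' z) (e z y))" by (simp add: inf_aci)
        also have "\<dots> \<le> inf (D y) (e z' y)" using Lorder_trans[OF ord z(2) z(1) y] by (intro inf_mono) auto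
        finally show ?thesis .
      qed
      thus "\<exists>m\<in>Y. inf (inf (D y) (e z y)) (e z' z) \<le> inf (D m) (e z' m)" using y by blast
    qed
  qed
  have sup: "is_Lsup Y e I s"
  proof (rule is_LsupI[OF ord sY])
    fix z assume z: "z \<in> Y"
    show "I z \<le> e z s" unfolding I_def
    proof (rule SUP_least)
      fix y assume y: "y \<in> Y"
      have "inf (D y) (e z y) \<le> inf (e z y) (e y s)" using Lsup_upper[OF ord s y]
        by (simp add: le_infI1)
      also have "\<dots> \<le> e z s" by (rule Lorder_trans[OF ord z y sY])
      finally show "inf (D y) (e z y) \<le> e z s" .
    qed
  next
    fix y assume y: "y \<in> Y"
    have "(INF x\<in>Y. limp (I x) (e x y)) \<le> (INF x\<in>Y. limp (D x) (e x y))"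
      by (rule INF_mono) (use DI in \<open>auto intro: limp_mono\<close>)
    also have "\<dots> = e s y" using s y by (simp add: is_Lsup_iff)
    finally show "(INF x\<in>Y. limp (I x) (e x y)) \<le> e s y" .
  qed
  show ?thesis using ne dir low sup by (simp add: Lideal_def Ldirected_def)
qed

lemma wb_ideal_le:
  "Lideal X e I \<Longrightarrow> is_Lsup X e I s \<Longrightarrow> Lwaybelow X e x y \<le> limp (e x s) (I y)"
  unfolding Lwaybelow_def by (rule Inf_lower) blast


lemma dir_inf:
  assumes D: "Ldirected X e D"
    and F: "\<And>x z. x \<in> X \<Longrightarrow> z \<in> X \<Longrightarrow> inf (F x) (e x z) \<le> F z"
    and G: "\<And>x z. x \<in> X \<Longrightarrow> z \<in> X \<Longrightarrow> inf (G x) (e x z) \<le> G z"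
  shows "inf (SUP x\<in>X. inf (F x) (D x)) (SUP y\<in>X. inf (G y) (D y)) \<le> (SUP z\<in>X. inf (inf (F z) (G z)) (D z))"
proof -
  let ?R = "SUP z\<in>X. inf (inf (F z) (G z)) (D z)"
  have "inf (inf (F x) (D x)) (inf (G y) (D y)) \<le> ?R" if xy: "x \<in> X" "y \<in> X" for x y
  proof -
    have "inf (inf (F x) (D x)) (inf (G y) (D y)) = inf (inf (F x) (G y)) (inf (D x) (D y))"
      by (simp add: inf_aci)
    also have "\<dots> \<le> inf (inf (F x) (G y)) (SUP z\<in>X. inf (D z) (inf (e x z) (e y z)))"
      using D xy by (intro inf_mono) (auto simp: Ldirected_def)
    also have "\<dots> = (SUP z\<in>X. inf (inf (F x) (G y)) (inf (D z) (inf (e x z) (e y z))))"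
      by (rule fr_inf_SUP)
    also have "\<dots> \<le> ?R"
    proof (rule SUP_mono)
      fix z assume z: "z \<in> X"
      have "inf (inf (F x) (G y)) (inf (D z) (inf (e x z) (e y z)))
          = inf (inf (inf (F x) (e x z)) (inf (G y) (e y z))) (D z)" by (simp add: inf_aci)
      also have "\<dots> \<le> inf (inf (F z) (G z)) (D z)" using F[OF xy(1) z] G[OF xy(2) z]
        by (intro inf_mono) auto
      finally show "\<exists>m\<in>X. inf (inf (F x) (G y)) (inf (D z) (inf (e x z) (e y z))) \<le> inf (inf (F m) (G m)) (D m)"
        using z by blast
    qed
    finally show ?thesis .
  qed
  thus ?thesis unfolding fr_SUP_inf fr_inf_SUP by (auto intro!: SUP_least)
qed

section \<open>Scott opens (general)\<close>

lemma sigmaD_out: "A \<in> sigmaL X e \<Longrightarrow> x \<notin> X \<Longrightarrow> A x = bot"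
  by (simp add: sigmaL_def)
lemma sigmaD_upper: "A \<in> sigmaL X e \<Longrightarrow> x \<in> X \<Longrightarrow> y \<in> X \<Longrightarrow> inf (A x) (e x y) \<le> A y"
  by (simp add: sigmaL_def Lupper_def)
lemma sigmaD_sup: "A \<in> sigmaL X e \<Longrightarrow> Ldirected X e D \<Longrightarrow> is_Lsup X e D s \<Longrightarrow> A s = (SUP x\<in>X. inf (A x) (D x))"
  by (simp add: sigmaL_def)

lemma sigmaI:
  assumes "\<And>x. x \<notin> X \<Longrightarrow> A x = bot" "\<And>x y. x \<in> X \<Longrightarrow> y \<in> X \<Longrightarrow> inf (A x) (e x y) \<le> A y"
    "\<And>D s. Ldirected X e D \<Longrightarrow> is_Lsup X e D s \<Longrightarrow> A s = (SUP x\<in>X. inf (A x) (D x))"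
  shows "A \<in> sigmaL X e"
  using assms by (auto simp: sigmaL_def Lupper_def)

lemma const_sigma: "const_on X c \<in> sigmaL X e"
proof (rule sigmaI)
  fix D s assume D: "Ldirected X e D" and s: "is_Lsup X e D s"
  have sX: "s \<in> X" using s by (simp add: is_Lsup_iff)
  have "(SUP x\<in>X. inf (const_on X c x) (D x)) = (SUP x\<in>X. inf c (D x))"
    by (rule SUP_cong) (auto simp: const_on_def)
  also have "\<dots> = inf c (SUP x\<in>X. D x)" by (simp add: fr_inf_SUP)
  also have "\<dots> = c" using D by (simp add: Ldirected_def Lnonempty_def)
  finally show "const_on X c s = (SUP x\<in>X. inf (const_on X c x) (D x))" using sX by (simp add: const_on_def)
qed (auto simp: const_on_def)

lemma sigma_Sup:
  assumes S: "S \<subseteq> sigmaL X e"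
  shows "Sup S \<in> sigmaL X e"
proof (rule sigmaI)
  fix x assume "x \<notin> X" thus "Sup S x = bot" using S sigmaD_out[of _ X e x] by (auto simp: Sup_apply)
next
  fix x y assume xy: "x \<in> X" "y \<in> X"
  show "inf (Sup S x) (e x y) \<le> Sup S y" unfolding Sup_apply fr_SUP_inf
    using S sigmaD_upper[OF _ xy] by (auto intro!: SUP_mono)
next
  fix D s assume D: "Ldirected X e D" and s: "is_Lsup X e D s"
  have "Sup S s = (SUP A\<in>S. SUP x\<in>X. inf (A x) (D x))" unfolding Sup_apply
    using S sigmaD_sup[OF _ D s] by (auto intro!: SUP_cong)
  also have "\<dots> = (SUP x\<in>X. SUP A\<in>S. inf (A x) (D x))" by (rule SUP_commute)
  also have "\<dots> = (SUP x\<in>X. inf (Sup S x) (D x))" unfolding Sup_apply fr_SUP_inf ..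
  finally show "Sup S s = (SUP x\<in>X. inf (Sup S x) (D x))" .
qed

lemma sigma_inf:
  assumes A: "A \<in> sigmaL X e" and B: "B \<in> sigmaL X e"
  shows "inf A B \<in> sigmaL X e"
proof (rule sigmaI)
  fix x assume "x \<notin> X" thus "inf A B x = bot" using sigmaD_out[OF A] by auto
next
  fix x y assume xy: "x \<in> X" "y \<in> X"
  have "inf (inf (A x) (B x)) (e x y) = inf (inf (A x) (e x y)) (inf (B x) (e x y))" by (simp add: inf_aci)
  also have "\<dots> \<le> inf (A y) (B y)" using sigmaD_upper[OF A xy] sigmaD_upper[OF B xy] by (rule inf_mono)
  finally show "inf (inf A B x) (e x y) \<le> inf A B y" by simp
next
  fix D s assume D: "Ldirected X e D" and s: "is_Lsup X e D s"
  have "inf A B s = inf (SUP x\<in>X. inf (A x) (D x)) (SUP y\<in>X. inf (B y) (D y))"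
    using sigmaD_sup[OF A D s] sigmaD_sup[OF B D s] by simp
  also have "\<dots> \<le> (SUP z\<in>X. inf (inf (A z) (B z)) (D z))"
    by (rule dir_inf[OF D], erule (1) sigmaD_upper[OF A], erule (1) sigmaD_upper[OF B])
  finally have le: "inf A B s \<le> (SUP z\<in>X. inf (inf A B z) (D z))" by simp
  have "(SUP z\<in>X. inf (inf A B z) (D z)) \<le> inf (SUP x\<in>X. inf (A x) (D x)) (SUP y\<in>X. inf (B y) (D y))"
  proof (rule SUP_least, rule le_infI)
    fix x assume x: "x \<in> X"
    show "inf (inf A B x) (D x) \<le> (SUP x\<in>X. inf (A x) (D x))"
      by (rule SUP_upper2[OF x]) (simp add: inf.coboundedI1 inf_mono)
    show "inf (inf A B x) (D x) \<le> (SUP x\<in>X. inf (B x) (D x))"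
      by (rule SUP_upper2[OF x]) (simp add: inf.coboundedI1 inf_mono)
  qed
  also have "\<dots> = inf A B s"
    using sigmaD_sup[OF A D s] sigmaD_sup[OF B D s] by simp
  finally show "inf A B s = (SUP x\<in>X. inf (inf A B x) (D x))" using le by (rule order_antisym[rotated])
qed


section \<open>The continuous L-ordered set P\<close>

locale cLo =
  fixes P :: "'a set" and e :: "'a \<Rightarrow> 'a \<Rightarrow> 'l::frame"
  assumes cont: "cont_Lordered P e"
begin

lemma ord: "Lorder P e" using cont by (simp add: cont_Lordered_def)
lemma erefl: "x \<in> P \<Longrightarrow> e x x = top" by (rule Lorder_refl[OF ord])
lemma etrans: "x \<in> P \<Longrightarrow> y \<in> P \<Longrightarrow> z \<in> P \<Longrightarrow> inf (e x y) (e y z) \<le> e x z" by (rule Lorder_trans[OF ord])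

abbreviation wb where "wb y x \<equiv> Lwaybelow P e x y"

lemma wb_dir: "x \<in> P \<Longrightarrow> Ldirected P e (Lwaybelow P e x)"
  using cont by (simp add: cont_Lordered_def)
lemma wb_sup: "x \<in> P \<Longrightarrow> is_Lsup P e (Lwaybelow P e x) x"
  using cont by (simp add: cont_Lordered_def)
lemma wb_ne: "x \<in> P \<Longrightarrow> (SUP y\<in>P. wb y x) = top"
  using wb_dir by (simp add: Ldirected_def Lnonempty_def)
lemma wb_dir2: "x \<in> P \<Longrightarrow> y1 \<in> P \<Longrightarrow> y2 \<in> P \<Longrightarrow>
   inf (wb y1 x) (wb y2 x) \<le> (SUP z\<in>P. inf (wb z x) (inf (e y1 z) (e y2 z)))"
  using wb_dir by (simp add: Ldirected_def)

lemma down_ideal: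
  assumes x: "x \<in> P"
  shows "Lideal P e (Ldown e x) \<and> is_Lsup P e (Ldown e x) x"
proof -
  have ne: "Lnonempty P (Ldown e x)"
  proof -
    have "top = Ldown e x x" using erefl[OF x] by (simp add: Ldown_def)
    also have "\<dots> \<le> (SUP y\<in>P. Ldown e x y)" using x by (rule SUP_upper)
    finally show ?thesis by (simp add: Lnonempty_def top_unique)
  qed
  have dir: "inf (Ldown e x y1) (Ldown e x y2) \<le> (SUP z\<in>P. inf (Ldown e x z) (inf (e y1 z) (e y2 z)))"
    if "y1 \<in> P" "y2 \<in> P" for y1 y2
    by (rule SUP_upper2[OF x]) (simp add: Ldown_def erefl[OF x])
  have low: "Llower P e (Ldown e x)" unfolding Llower_def Ldown_def
    using etrans x by (metis inf_commute)
  have sup: "is_Lsup P e (Ldown e x) x"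
  proof (rule is_LsupI[OF ord x])
    fix y assume y: "y \<in> P"
    have "(INF z\<in>P. limp (Ldown e x z) (e z y)) \<le> limp (Ldown e x x) (e x y)" using x by (rule INF_lower)
    thus "(INF z\<in>P. limp (Ldown e x z) (e z y)) \<le> e x y" by (simp add: Ldown_def erefl[OF x])
  qed (simp add: Ldown_def)
  show ?thesis using ne dir low sup by (simp add: Lideal_def Ldirected_def)
qed

lemma wb_le_e: "x \<in> P \<Longrightarrow> wb y x \<le> e y x"
  using wb_ideal_le[of P e "Ldown e x" x x y] down_ideal[of x] by (simp add: erefl Ldown_def)

lemma wb_upper:
  assumes ab: "a \<in> P" "b \<in> P"
  shows "inf (wb y a) (e a b) \<le> wb y b"
  unfolding Lwaybelow_def[of P e b y]
proof (rule Inf_greatest, clarify)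
  fix I s assume I: "Lideal P e I" and s: "is_Lsup P e I s"
  have sP: "s \<in> P" using s by (simp add: is_Lsup_iff)
  have "inf (inf (wb y a) (e a b)) (e b s) = inf (wb y a) (inf (e a b) (e b s))" by (simp add: inf_aci)
  also have "\<dots> \<le> inf (limp (e a s) (I y)) (e a s)"
    using wb_ideal_le[OF I s, of a y] etrans[OF ab sP] by (rule inf_mono)
  also have "\<dots> \<le> I y" by (rule limp_mp)
  finally show "inf (wb y a) (e a b) \<le> limp (e b s) (I y)" by (rule limpI)
qed

lemma wb_lower:
  assumes yy: "y \<in> P" "y' \<in> P"
  shows "inf (wb y x) (e y' y) \<le> wb y' x"
  unfolding Lwaybelow_def[of P e x y']
proof (rule Inf_greatest, clarify)
  fix I s assume I: "Lideal P e I" and s: "is_Lsup P e I s"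
  have "inf (inf (wb y x) (e y' y)) (e x s) = inf (inf (wb y x) (e x s)) (e y' y)" by (simp add: inf_aci)
  also have "\<dots> \<le> inf (I y) (e y' y)"
    using wb_ideal_le[OF I s, of x y] by (intro inf_mono order_refl) (simp add: limp_iff)
  also have "\<dots> \<le> I y'" using I yy by (simp add: Lideal_def Llower_def)
  finally show "inf (wb y x) (e y' y) \<le> limp (e x s) (I y')" by (rule limpI)
qed

lemma wb_directed_sup:
  assumes D: "Ldirected P e D" and s: "is_Lsup P e D s"
  shows "wb z s \<le> (SUP a\<in>P. inf (D a) (e z a))"
proof -
  have sP: "s \<in> P" using s by (simp add: is_Lsup_iff)
  from gen_ideal[OF ord D s] have "Lideal P e (\<lambda>z. SUP y\<in>P. inf (D y) (e z y))"
      "is_Lsup P e (\<lambda>z. SUP y\<in>P. inf (D y) (e z y)) s" by auto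
  from wb_ideal_le[OF this, of s z] show ?thesis by (simp add: erefl[OF sP])
qed

lemma interp:
  assumes x: "x \<in> P"
  shows "wb y x \<le> (SUP z\<in>P. inf (wb y z) (wb z x))"
proof -
  define I where "I = (\<lambda>y. SUP z\<in>P. inf (wb y z) (wb z x))"
  have ne: "Lnonempty P I"
  proof -
    have "top = (SUP z\<in>P. wb z x)" using wb_ne[OF x] by simp
    also have "\<dots> = (SUP z\<in>P. inf (SUP y\<in>P. wb y z) (wb z x))"
      by (rule SUP_cong) (simp_all add: wb_ne)
    also have "\<dots> = (SUP z\<in>P. SUP y\<in>P. inf (wb y z) (wb z x))" by (simp add: fr_SUP_inf)
    also have "\<dots> = (SUP y\<in>P. I y)" unfolding I_def by (rule SUP_commute)
    finally show ?thesis by (simp add: Lnonempty_def)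
  qed
  have dir: "inf (I y1) (I y2) \<le> (SUP u\<in>P. inf (I u) (inf (e y1 u) (e y2 u)))"
    if y: "y1 \<in> P" "y2 \<in> P" for y1 y2
  proof -
    have "inf (I y1) (I y2) \<le> (SUP z\<in>P. inf (inf (wb y1 z) (wb y2 z)) (wb z x))"
      unfolding I_def by (rule dir_inf[OF wb_dir[OF x]]) (auto intro: wb_upper)
    also have "\<dots> \<le> (SUP u\<in>P. inf (I u) (inf (e y1 u) (e y2 u)))"
    proof (rule SUP_least)
      fix z assume z: "z \<in> P"
      have "inf (inf (wb y1 z) (wb y2 z)) (wb z x) \<le> inf (SUP u\<in>P. inf (wb u z) (inf (e y1 u) (e y2 u))) (wb z x)"
        using wb_dir2[OF z y] by (rule inf_mono) simp
      also have "\<dots> = (SUP u\<in>P. inf (inf (wb u z) (inf (e y1 u) (e y2 u))) (wb z x))" by (rule fr_SUP_inf)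
      also have "\<dots> \<le> (SUP u\<in>P. inf (I u) (inf (e y1 u) (e y2 u)))"
      proof (rule SUP_mono)
        fix u assume u: "u \<in> P"
        have "inf (inf (wb u z) (inf (e y1 u) (e y2 u))) (wb z x) = inf (inf (wb u z) (wb z x)) (inf (e y1 u) (e y2 u))"
          by (simp add: inf_aci)
        also have "\<dots> \<le> inf (I u) (inf (e y1 u) (e y2 u))" unfolding I_def
          by (intro inf_mono order_refl SUP_upper z)
        finally show "\<exists>m\<in>P. inf (inf (wb u z) (inf (e y1 u) (e y2 u))) (wb z x) \<le> inf (I m) (inf (e y1 m) (e y2 m))"
          using u by blast
      qed
      finally show "inf (inf (wb y1 z) (wb y2 z)) (wb z x) \<le> (SUP u\<in>P. inf (I u) (inf (e y1 u) (e y2 u)))" .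
    qed
    finally show ?thesis .
  qed
  have low: "Llower P e I" unfolding Llower_def
  proof (intro ballI)
    fix y y' assume y: "y \<in> P" "y' \<in> P"
    show "inf (I y) (e y' y) \<le> I y'" unfolding I_def fr_SUP_inf
    proof (rule SUP_mono)
      fix z assume z: "z \<in> P"
      have "inf (inf (wb y z) (wb z x)) (e y' y) = inf (inf (wb y z) (e y' y)) (wb z x)" by (simp add: inf_aci)
      also have "\<dots> \<le> inf (wb y' z) (wb z x)" using wb_lower[OF y] by (rule inf_mono) simp
      finally show "\<exists>m\<in>P. inf (inf (wb y z) (wb z x)) (e y' y) \<le> inf (wb y' m) (wb m x)" using z by blast
    qed
  qed
  have sup: "is_Lsup P e I x"
  proof (rule is_LsupI[OF ord x])
    fix y assume y: "y \<in> P"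
    show "I y \<le> e y x" unfolding I_def
    proof (rule SUP_least)
      fix z assume z: "z \<in> P"
      have "inf (wb y z) (wb z x) \<le> inf (e y z) (e z x)" using wb_le_e[OF z] wb_le_e[OF x] by (rule inf_mono)
      also have "\<dots> \<le> e y x" using etrans[OF y z x] .
      finally show "inf (wb y z) (wb z x) \<le> e y x" .
    qed
  next
    fix b assume b: "b \<in> P"
    let ?G = "INF y\<in>P. limp (I y) (e y b)"
    have "?G \<le> (INF z\<in>P. limp (wb z x) (e z b))"
    proof (rule INF_greatest, rule limpI)
      fix z assume z: "z \<in> P"
      have "inf ?G (wb z x) \<le> (INF y\<in>P. limp (wb y z) (e y b))"
      proof (rule INF_greatest, rule limpI)
        fix y assume y: "y \<in> P"
        have "inf (inf ?G (wb z x)) (wb y z) \<le> inf (limp (I y) (e y b)) (I y)"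
        proof -
          have "inf (inf ?G (wb z x)) (wb y z) = inf ?G (inf (wb y z) (wb z x))" by (simp add: inf_aci)
          also have "\<dots> \<le> inf (limp (I y) (e y b)) (I y)" unfolding I_def
            by (intro inf_mono INF_lower y SUP_upper z)
          finally show ?thesis unfolding I_def .
        qed
        also have "\<dots> \<le> e y b" by (rule limp_mp)
        finally show "inf (inf ?G (wb z x)) (wb y z) \<le> e y b" .
      qed
      also have "\<dots> = e z b" using wb_sup[OF z] b by (simp add: is_Lsup_iff)
      finally show "inf ?G (wb z x) \<le> e z b" .
    qed
    also have "\<dots> = e x b" using wb_sup[OF x] b by (simp add: is_Lsup_iff)
    finally show "?G \<le> e x b" .
  qed
  have "wb y x \<le> limp (e x x) (I y)"
    by (rule wb_ideal_le) (use ne dir low sup in \<open>simp_all add: Lideal_def Ldirected_def\<close>)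
  thus ?thesis by (simp add: erefl[OF x] I_def)
qed

end



context cLo begin

definition up where "up x = (\<lambda>a. if a \<in> P then wb x a else bot)"

lemma up_in: "a \<in> P \<Longrightarrow> up x a = wb x a" by (simp add: up_def)

lemma up_sigma:
  assumes x: "x \<in> P"
  shows "up x \<in> sigmaL P e"
proof (rule sigmaI)
  fix a b assume ab: "a \<in> P" "b \<in> P"
  show "inf (up x a) (e a b) \<le> up x b" using wb_upper[OF ab] ab by (simp add: up_def)
next
  fix D s assume D: "Ldirected P e D" and s: "is_Lsup P e D s"
  have sP: "s \<in> P" using s by (simp add: is_Lsup_iff)
  have "(SUP a\<in>P. inf (up x a) (D a)) = (SUP a\<in>P. inf (wb x a) (D a))"
    by (rule SUP_cong) (simp_all add: up_def)
  moreover have "wb x s = (SUP a\<in>P. inf (wb x a) (D a))"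
  proof (rule order_antisym)
    have "wb x s \<le> (SUP z\<in>P. inf (wb x z) (wb z s))" using sP by (rule interp)
    also have "\<dots> \<le> (SUP a\<in>P. inf (wb x a) (D a))"
    proof (rule SUP_least)
      fix z assume z: "z \<in> P"
      have "inf (wb x z) (wb z s) \<le> inf (wb x z) (SUP a\<in>P. inf (D a) (e z a))"
        using wb_directed_sup[OF D s] by (rule inf_mono[OF order_refl])
      also have "\<dots> = (SUP a\<in>P. inf (wb x z) (inf (D a) (e z a)))" by (rule fr_inf_SUP)
      also have "\<dots> \<le> (SUP a\<in>P. inf (wb x a) (D a))"
      proof (rule SUP_mono)
        fix a assume a: "a \<in> P"
        have "inf (wb x z) (inf (D a) (e z a)) = inf (inf (wb x z) (e z a)) (D a)" by (simp add: inf_aci)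
        also have "\<dots> \<le> inf (wb x a) (D a)" using wb_upper[OF z a] by (rule inf_mono) simp
        finally show "\<exists>m\<in>P. inf (wb x z) (inf (D a) (e z a)) \<le> inf (wb x m) (D m)" using a by blast
      qed
      finally show "inf (wb x z) (wb z s) \<le> (SUP a\<in>P. inf (wb x a) (D a))" .
    qed
    finally show "wb x s \<le> (SUP a\<in>P. inf (wb x a) (D a))" .
  next
    show "(SUP a\<in>P. inf (wb x a) (D a)) \<le> wb x s"
    proof (rule SUP_least)
      fix a assume a: "a \<in> P"
      have "inf (wb x a) (D a) \<le> inf (wb x a) (e a s)" using Lsup_upper[OF ord s a] by (rule inf_mono[OF order_refl])
      also have "\<dots> \<le> wb x s" by (rule wb_upper[OF a sP])
      finally show "inf (wb x a) (D a) \<le> wb x s" .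
    qed
  qed
  ultimately show "up x s = (SUP a\<in>P. inf (up x a) (D a))" using sP by (simp add: up_def)
qed (simp add: up_def)

lemma up_cover:
  assumes A: "A \<in> sigmaL P e"
  shows "A = (SUP x\<in>P. inf (up x) (const_on P (A x)))"
proof (rule ext)
  fix a
  show "A a = (SUP x\<in>P. inf (up x) (const_on P (A x))) a"
  proof (cases "a \<in> P")
    case True
    have "A a = (SUP x\<in>P. inf (A x) (wb x a))" using sigmaD_sup[OF A wb_dir[OF True] wb_sup[OF True]] .
    also have "\<dots> = (SUP x\<in>P. inf (up x) (const_on P (A x))) a"
      unfolding SUP_apply using True by (auto simp: up_def const_on_def inf_commute intro!: SUP_cong)
    finally show ?thesis .
  next
    case False
    thus ?thesis using sigmaD_out[OF A False] by (simp add: SUP_apply up_def const_on_def)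
  qed
qed

lemma up_dir:
  assumes xy: "x \<in> P" "y \<in> P"
  shows "inf (up x) (up y) \<le> (SUP z\<in>P. inf (up z) (const_on P (inf (e x z) (e y z))))"
proof (rule le_funI)
  fix a
  show "inf (up x) (up y) a \<le> (SUP z\<in>P. inf (up z) (const_on P (inf (e x z) (e y z)))) a"
  proof (cases "a \<in> P")
    case True
    have "inf (up x) (up y) a = inf (wb x a) (wb y a)" using True by (simp add: up_def)
    also have "\<dots> \<le> (SUP z\<in>P. inf (wb z a) (inf (e x z) (e y z)))" using wb_dir2[OF True xy] .
    also have "\<dots> = (SUP z\<in>P. inf (up z) (const_on P (inf (e x z) (e y z)))) a"
      unfolding SUP_apply using True by (auto simp: up_def const_on_def intro!: SUP_cong)
    finally show ?thesis .
  next
    case False thus ?thesis by (simp add: up_def)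
  qed
qed

lemma SUP_up: "(SUP x\<in>P. up x) = const_on P top"
proof (rule ext)
  fix a show "(SUP x\<in>P. up x) a = const_on P top a"
    unfolding SUP_apply by (cases "a \<in> P") (simp_all add: up_def const_on_def wb_ne)
qed

lemma up_below:
  assumes A: "A \<in> sigmaL P e" and x: "x \<in> P"
  shows "inf (up x) (const_on P (A x)) \<le> A"
proof (rule le_funI)
  fix a show "inf (up x) (const_on P (A x)) a \<le> A a"
  proof (cases "a \<in> P")
    case True
    have "inf (wb x a) (A x) \<le> inf (A x) (e x a)" using wb_le_e[OF True] by (simp add: le_infI1)
    also have "\<dots> \<le> A a" using sigmaD_upper[OF A x True] .
    finally show ?thesis using True by (simp add: up_def const_on_def)
  qed (simp add: up_def)
qed

lemma up_const_sigma: "x \<in> P \<Longrightarrow> inf (up x) (const_on P c) \<in> sigmaL P e"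
  by (intro sigma_inf up_sigma const_sigma)


abbreviation "Sg \<equiv> sigmaL P e"
abbreviation "Qp \<equiv> ptL P e"
abbreviation "eQ \<equiv> subPt P e"
abbreviation "eta \<equiv> etaP P e"

lemma ptD_out: "p \<in> Qp \<Longrightarrow> A \<notin> Sg \<Longrightarrow> p A = bot" by (simp add: ptL_def)
lemma ptD_inf: "p \<in> Qp \<Longrightarrow> A \<in> Sg \<Longrightarrow> B \<in> Sg \<Longrightarrow> p (inf A B) = inf (p A) (p B)" by (simp add: ptL_def)
lemma ptD_Sup: "p \<in> Qp \<Longrightarrow> S \<subseteq> Sg \<Longrightarrow> p (Sup S) = Sup (p ` S)" by (simp add: ptL_def)
lemma ptD_const: "p \<in> Qp \<Longrightarrow> p (const_on P c) = c" by (simp add: ptL_def)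

lemma ptI:
  assumes "\<And>A. A \<notin> Sg \<Longrightarrow> p A = bot"
    "\<And>A B. A \<in> Sg \<Longrightarrow> B \<in> Sg \<Longrightarrow> p (inf A B) = inf (p A) (p B)"
    "\<And>S. S \<subseteq> Sg \<Longrightarrow> p (Sup S) = Sup (p ` S)"
    "\<And>c. p (const_on P c) = c"
  shows "p \<in> Qp"
  using assms by (simp add: ptL_def)

lemma pt_SUP: "p \<in> Qp \<Longrightarrow> (\<And>i. i \<in> I \<Longrightarrow> F i \<in> Sg) \<Longrightarrow> p (SUP i\<in>I. F i) = (SUP i\<in>I. p (F i))"
  using ptD_Sup[of p "F ` I"] by (auto simp: image_comp)

lemma pt_mono: "p \<in> Qp \<Longrightarrow> A \<in> Sg \<Longrightarrow> B \<in> Sg \<Longrightarrow> A \<le> B \<Longrightarrow> p A \<le> p B"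
  using ptD_inf[of p A B] by (metis inf.absorb_iff1 inf.cobounded2)

lemma pt_inf_const: "p \<in> Qp \<Longrightarrow> A \<in> Sg \<Longrightarrow> p (inf A (const_on P c)) = inf (p A) c"
  using ptD_inf[of p A "const_on P c"] const_sigma ptD_const by metis

lemma pt_rep:
  assumes p: "p \<in> Qp" and A: "A \<in> Sg"
  shows "p A = (SUP x\<in>P. inf (p (up x)) (A x))"
proof -
  have "p A = p (SUP x\<in>P. inf (up x) (const_on P (A x)))" using up_cover[OF A] by simp
  also have "\<dots> = (SUP x\<in>P. p (inf (up x) (const_on P (A x))))" using p up_const_sigma by (rule pt_SUP)
  also have "\<dots> = (SUP x\<in>P. inf (p (up x)) (A x))" using pt_inf_const[OF p up_sigma] by simp
  finally show ?thesis .
qed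

lemma eta_app: "A \<in> Sg \<Longrightarrow> eta x A = A x" by (simp add: etaP_def)

lemma eta_in: assumes x: "x \<in> P" shows "eta x \<in> Qp"
proof (rule ptI)
  fix S assume S: "S \<subseteq> Sg"
  have "eta x ` S = (\<lambda>A. A x) ` S" using S by (auto simp: etaP_def intro!: image_cong)
  thus "eta x (Sup S) = Sup (eta x ` S)" using sigma_Sup[OF S]
    by (simp add: etaP_def Sup_apply)
next
  fix c
  have "const_on P c \<in> Sg" by (rule const_sigma)
  hence "eta x (const_on P c) = const_on P c x" by (simp add: etaP_def)
  thus "eta x (const_on P c) = c" using x by (simp add: const_on_def)
qed (auto simp: etaP_def sigma_inf)

lemma eQ_app: "A \<in> Sg \<Longrightarrow> inf (p A) (eQ p q) \<le> q A"
proof -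
  assume A: "A \<in> Sg"
  have "eQ p q \<le> limp (p A) (q A)" unfolding subPt_def using A by (rule INF_lower)
  thus ?thesis by (simp add: limp_iff inf_commute)
qed

lemma eQ_le: "(\<And>A. A \<in> Sg \<Longrightarrow> inf c (p A) \<le> q A) \<Longrightarrow> c \<le> eQ p q"
  unfolding subPt_def by (auto intro!: INF_greatest limpI)

lemma eQ_trans: "inf (eQ p q) (eQ q r) \<le> eQ p r"
proof (rule eQ_le)
  fix A assume A: "A \<in> Sg"
  have "inf (inf (eQ p q) (eQ q r)) (p A) = inf (inf (p A) (eQ p q)) (eQ q r)" by (simp add: inf_aci)
  also have "\<dots> \<le> inf (q A) (eQ q r)" using eQ_app[OF A] by (rule inf_mono) simp
  also have "\<dots> \<le> r A" using eQ_app[OF A] .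
  finally show "inf (inf (eQ p q) (eQ q r)) (p A) \<le> r A" .
qed

lemma eQ_refl: "eQ p p = top" by (simp add: subPt_def)

lemma Q_ord: "Lorder Qp eQ"
  unfolding Lorder_def
proof (intro conjI ballI impI)
  fix p q assume pq: "p \<in> Qp" "q \<in> Qp" and t: "inf (eQ p q) (eQ q p) = top"
  show "p = q"
  proof (rule ext)
    fix A show "p A = q A"
    proof (cases "A \<in> Sg")
      case True
      have "p A \<le> q A" using eQ_app[OF True, of p q] t by (simp add: inf_eq_top_iff)
      moreover have "q A \<le> p A" using eQ_app[OF True, of q p] t by (simp add: inf_eq_top_iff)
      ultimately show ?thesis by simp
    next
      case False thus ?thesis using ptD_out[OF pq(1) False] ptD_out[OF pq(2) False] by simp
    qed
  qed
qed (simp_all add: eQ_refl eQ_trans)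

lemma eta_mono: "x \<in> P \<Longrightarrow> y \<in> P \<Longrightarrow> e x y \<le> eQ (eta x) (eta y)"
  by (rule eQ_le) (simp add: eta_app inf_commute sigmaD_upper)

lemma up_le_eQ:
  assumes p: "p \<in> Qp" and x: "x \<in> P"
  shows "p (up x) \<le> eQ (eta x) p"
proof (rule eQ_le)
  fix A assume A: "A \<in> Sg"
  have "inf (p (up x)) (eta x A) = p (inf (up x) (const_on P (A x)))"
    using pt_inf_const[OF p up_sigma[OF x]] A by (simp add: eta_app)
  also have "\<dots> \<le> p A" using p up_const_sigma[OF x] A up_below[OF A x] by (rule pt_mono)
  finally show "inf (p (up x)) (eta x A) \<le> p A" .
qed

lemma Dp_dir:
  assumes p: "p \<in> Qp"
  shows "Ldirected P e (\<lambda>x. p (up x))"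
  unfolding Ldirected_def Lnonempty_def
proof (intro conjI ballI)
  have "(SUP x\<in>P. p (up x)) = p (SUP x\<in>P. up x)" by (rule pt_SUP[OF p, symmetric]) (rule up_sigma)
  thus "(SUP x\<in>P. p (up x)) = top" by (simp add: SUP_up ptD_const[OF p])
next
  fix x y assume xy: "x \<in> P" "y \<in> P"
  have "inf (p (up x)) (p (up y)) = p (inf (up x) (up y))" using ptD_inf[OF p up_sigma up_sigma] xy by simp
  also have "\<dots> \<le> p (SUP z\<in>P. inf (up z) (const_on P (inf (e x z) (e y z))))"
    by (rule pt_mono[OF p sigma_inf[OF up_sigma up_sigma] _ up_dir[OF xy]])
       (use xy in \<open>auto intro!: sigma_Sup up_const_sigma\<close>)
  also have "\<dots> = (SUP z\<in>P. p (inf (up z) (const_on P (inf (e x z) (e y z)))))"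
    by (rule pt_SUP[OF p]) (rule up_const_sigma)
  also have "\<dots> = (SUP z\<in>P. inf (p (up z)) (inf (e x z) (e y z)))"
    by (rule SUP_cong[OF refl]) (rule pt_inf_const[OF p up_sigma])
  finally show "inf (p (up x)) (p (up y)) \<le> (SUP z\<in>P. inf (p (up z)) (inf (e x z) (e y z)))" .
qed

lemma eta_maps: "\<And>x. x \<in> P \<Longrightarrow> eta x \<in> Qp" by (rule eta_in)

lemma pt_is_sup:
  assumes p: "p \<in> Qp"
  shows "is_Lsup Qp eQ (Limg P eta (\<lambda>x. p (up x))) p"
proof -
  have "\<forall>r\<in>Qp. eQ p r = (INF x\<in>P. limp (p (up x)) (eQ (eta x) r))"
  proof (intro ballI order_antisym)
  fix r assume r: "r \<in> Qp"
  show "eQ p r \<le> (INF x\<in>P. limp (p (up x)) (eQ (eta x) r))"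
  proof (rule INF_greatest, rule limpI)
    fix x assume x: "x \<in> P"
    have "inf (eQ p r) (p (up x)) \<le> inf (eQ (eta x) p) (eQ p r)"
      using inf_mono[OF up_le_eQ[OF p x] order_refl, of "eQ p r"] by (simp add: inf_commute)
    also have "\<dots> \<le> eQ (eta x) r" by (rule eQ_trans)
    finally show "inf (eQ p r) (p (up x)) \<le> eQ (eta x) r" .
  qed
  let ?G = "INF x\<in>P. limp (p (up x)) (eQ (eta x) r)"
  show "?G \<le> eQ p r"
  proof (rule eQ_le)
    fix A assume A: "A \<in> Sg"
    have "inf ?G (p A) = (SUP x\<in>P. inf ?G (inf (p (up x)) (A x)))"
      using pt_rep[OF p A] by (simp add: fr_inf_SUP)
    also have "\<dots> \<le> r A"
    proof (rule SUP_least)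
      fix x assume x: "x \<in> P"
      have "inf ?G (inf (p (up x)) (A x)) \<le> inf (inf (limp (p (up x)) (eQ (eta x) r)) (p (up x))) (A x)"
        unfolding inf_assoc[symmetric] by (intro inf_mono order_refl INF_lower x)
      also have "\<dots> \<le> inf (eQ (eta x) r) (A x)" by (intro inf_mono limp_mp order_refl)
      also have "\<dots> = inf (eta x A) (eQ (eta x) r)" using A by (simp add: eta_app inf_commute)
      also have "\<dots> \<le> r A" by (rule eQ_app[OF A])
      finally show "inf ?G (inf (p (up x)) (A x)) \<le> r A" .
    qed
    finally show "inf ?G (p A) \<le> r A" .
  qed
  qed
  thus ?thesis using is_Lsup_Limg[of P eta Qp eQ "\<lambda>x. p (up x)" p] eta_in p by simp
qed

end



context cLo begin

definition pstar where "pstar Dd = (\<lambda>A. if A \<in> Sg then SUP q\<in>Qp. inf (Dd q) (q A) else bot)"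

lemma pstar_in:
  assumes Dd: "Ldirected Qp eQ Dd"
  shows "pstar Dd \<in> Qp"
proof (rule ptI)
  fix A assume "A \<notin> Sg" thus "pstar Dd A = bot" by (simp add: pstar_def)
next
  fix A B assume A: "A \<in> Sg" and B: "B \<in> Sg"
  have AB: "inf A B \<in> Sg" using A B by (rule sigma_inf)
  have "pstar Dd (inf A B) = (SUP q\<in>Qp. inf (Dd q) (inf (q A) (q B)))"
    using AB A B by (auto simp: pstar_def ptD_inf intro!: SUP_cong)
  also have "\<dots> = inf (pstar Dd A) (pstar Dd B)"
  proof (rule order_antisym)
    show "(SUP q\<in>Qp. inf (Dd q) (inf (q A) (q B))) \<le> inf (pstar Dd A) (pstar Dd B)"
      unfolding pstar_def using A B
    proof (simp only: if_True, intro SUP_least le_infI)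
      fix q assume q: "q \<in> Qp"
      show "inf (Dd q) (inf (q A) (q B)) \<le> (SUP q\<in>Qp. inf (Dd q) (q A))"
        by (rule SUP_upper2[OF q]) (rule inf_mono[OF order_refl inf_le1])
      show "inf (Dd q) (inf (q A) (q B)) \<le> (SUP q\<in>Qp. inf (Dd q) (q B))"
        by (rule SUP_upper2[OF q]) (rule inf_mono[OF order_refl inf_le2])
    qed
    have "inf (pstar Dd A) (pstar Dd B) = inf (SUP q\<in>Qp. inf (q A) (Dd q)) (SUP q\<in>Qp. inf (q B) (Dd q))"
      using A B by (simp add: pstar_def inf_commute)
    also have "\<dots> \<le> (SUP q\<in>Qp. inf (inf (q A) (q B)) (Dd q))"
      by (rule dir_inf[OF Dd]) (rule eQ_app[OF A], rule eQ_app[OF B])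
    also have "\<dots> = (SUP q\<in>Qp. inf (Dd q) (inf (q A) (q B)))" by (simp add: inf_commute)
    finally show "inf (pstar Dd A) (pstar Dd B) \<le> (SUP q\<in>Qp. inf (Dd q) (inf (q A) (q B)))" .
  qed
  finally show "pstar Dd (inf A B) = inf (pstar Dd A) (pstar Dd B)" .
next
  fix S assume S: "S \<subseteq> Sg"
  have "pstar Dd (Sup S) = (SUP q\<in>Qp. inf (Dd q) (SUP A\<in>S. q A))"
    using sigma_Sup[OF S] S by (auto simp: pstar_def ptD_Sup intro!: SUP_cong)
  also have "\<dots> = (SUP q\<in>Qp. SUP A\<in>S. inf (Dd q) (q A))" by (simp add: fr_inf_SUP)
  also have "\<dots> = (SUP A\<in>S. SUP q\<in>Qp. inf (Dd q) (q A))" by (rule SUP_commute)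
  also have "\<dots> = Sup (pstar Dd ` S)"
  proof -
    have "pstar Dd ` S = (\<lambda>A. SUP q\<in>Qp. inf (Dd q) (q A)) ` S"
      using S by (auto simp: pstar_def intro!: image_cong)
    thus ?thesis by simp
  qed
  finally show "pstar Dd (Sup S) = Sup (pstar Dd ` S)" .
next
  fix c
  have "pstar Dd (const_on P c) = (SUP q\<in>Qp. inf (Dd q) c)"
    using const_sigma by (auto simp: pstar_def ptD_const intro!: SUP_cong)
  also have "\<dots> = inf (SUP q\<in>Qp. Dd q) c" by (simp add: fr_SUP_inf)
  also have "\<dots> = c" using Dd by (simp add: Ldirected_def Lnonempty_def)
  finally show "pstar Dd (const_on P c) = c" .
qed

lemma pstar_sup:
  assumes Dd: "Ldirected Qp eQ Dd"
  shows "is_Lsup Qp eQ Dd (pstar Dd)"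
  unfolding is_Lsup_iff
proof (intro conjI ballI pstar_in[OF Dd])
  fix r assume r: "r \<in> Qp"
  have "eQ (pstar Dd) r = (INF A\<in>Sg. limp (SUP q\<in>Qp. inf (Dd q) (q A)) (r A))"
    unfolding subPt_def by (rule INF_cong) (simp_all add: pstar_def)
  also have "\<dots> = (INF A\<in>Sg. INF q\<in>Qp. limp (Dd q) (limp (q A) (r A)))"
    by (simp add: limp_SUP limp_inf)
  also have "\<dots> = (INF q\<in>Qp. INF A\<in>Sg. limp (Dd q) (limp (q A) (r A)))" by (rule INF_commute)
  also have "\<dots> = (INF q\<in>Qp. limp (Dd q) (eQ q r))" by (simp add: subPt_def limp_INF)
  finally show "eQ (pstar Dd) r = (INF q\<in>Qp. limp (Dd q) (eQ q r))" .
qed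

lemma Q_dcpo: "Ldcpo Qp eQ"
  unfolding Ldcpo_def using Q_ord pstar_sup by blast

lemma Q_sup_eq: "Ldirected Qp eQ Dd \<Longrightarrow> is_Lsup Qp eQ Dd s \<Longrightarrow> s = pstar Dd"
  using Lsup_unique[OF Q_ord] pstar_sup by blast

lemma eQ_eta_left: "eQ (eta x) r = (INF A\<in>Sg. limp (A x) (r A))"
  unfolding subPt_def by (rule INF_cong) (simp_all add: eta_app)

lemma eta_scott: "scott_cont P e Qp eQ eta"
  unfolding scott_cont_def
proof (intro conjI allI impI ballI eta_in)
  fix D s assume Ds: "Ldirected P e D \<and> is_Lsup P e D s"
  hence D: "Ldirected P e D" and s: "is_Lsup P e D s" by auto
  have sP: "s \<in> P" using s by (simp add: is_Lsup_iff)
  have "\<forall>r\<in>Qp. eQ (eta s) r = (INF x\<in>P. limp (D x) (eQ (eta x) r))"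
  proof
    fix r assume r: "r \<in> Qp"
    have "eQ (eta s) r = (INF A\<in>Sg. limp (SUP x\<in>P. inf (A x) (D x)) (r A))"
      unfolding eQ_eta_left by (rule INF_cong) (simp_all add: sigmaD_sup[OF _ D s])
    also have "\<dots> = (INF A\<in>Sg. INF x\<in>P. limp (D x) (limp (A x) (r A)))"
      by (simp add: limp_SUP limp_inf[symmetric] inf_commute)
    also have "\<dots> = (INF x\<in>P. INF A\<in>Sg. limp (D x) (limp (A x) (r A)))" by (rule INF_commute)
    also have "\<dots> = (INF x\<in>P. limp (D x) (eQ (eta x) r))" by (simp add: eQ_eta_left limp_INF)
    finally show "eQ (eta s) r = (INF x\<in>P. limp (D x) (eQ (eta x) r))" .
  qed
  thus "is_Lsup Qp eQ (Limg P eta D) (eta s)"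
    using is_Lsup_Limg[of P eta Qp eQ D "eta s"] eta_in sP by simp
qed

definition J where "J p q = (SUP x\<in>P. inf (p (up x)) (eQ q (eta x)))"

lemma Dimg_dir:
  assumes p: "p \<in> Qp"
  shows "Ldirected Qp eQ (Limg P eta (\<lambda>x. p (up x)))"
proof (rule Ldirected_Limg)
  fix x assume "x \<in> P" thus "eta x \<in> Qp" by (rule eta_in)
next
  fix x y assume "x \<in> P" "y \<in> P" thus "e x y \<le> eQ (eta x) (eta y)" by (rule eta_mono)
next
  show "Ldirected P e (\<lambda>x. p (up x))" by (rule Dp_dir[OF p])
qed

lemma J_ideal:
  assumes p: "p \<in> Qp"
  shows "Lideal Qp eQ (J p) \<and> is_Lsup Qp eQ (J p) p"
proof -
  have eq: "(\<lambda>z. SUP y\<in>Qp. inf (Limg P eta (\<lambda>x. p (up x)) y) (eQ z y)) = J p"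
    unfolding J_def by (rule ext) (rule SUP_Limg, rule eta_in)
  show ?thesis using gen_ideal[OF Q_ord Dimg_dir[OF p] pt_is_sup[OF p]] unfolding eq .
qed

lemma wbQ:
  assumes p: "p \<in> Qp" and q: "q \<in> Qp"
  shows "Lwaybelow Qp eQ p q = J p q"
proof (rule order_antisym)
  show "Lwaybelow Qp eQ p q \<le> J p q"
    using wb_ideal_le[of Qp eQ "J p" p p q] J_ideal[OF p] by (simp add: eQ_refl)
  show "J p q \<le> Lwaybelow Qp eQ p q"
    unfolding Lwaybelow_def
  proof (rule Inf_greatest, clarify)
    fix I s assume I: "Lideal Qp eQ I" and s: "is_Lsup Qp eQ I s"
    have Id: "Ldirected Qp eQ I" using I by (simp add: Lideal_def)
    have sI: "s = pstar I" using Q_sup_eq[OF Id s] .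
    have sQ: "s \<in> Qp" using s by (simp add: is_Lsup_iff)
    have "inf (J p q) (eQ p s) \<le> I q" unfolding J_def fr_SUP_inf
    proof (rule SUP_least)
      fix x assume x: "x \<in> P"
      have "inf (inf (p (up x)) (eQ q (eta x))) (eQ p s) = inf (inf (p (up x)) (eQ p s)) (eQ q (eta x))"
        by (simp add: inf_aci)
      also have "\<dots> \<le> inf (s (up x)) (eQ q (eta x))"
        using eQ_app[OF up_sigma[OF x]] by (rule inf_mono) simp
      also have "\<dots> = (SUP r\<in>Qp. inf (inf (I r) (r (up x))) (eQ q (eta x)))"
        using up_sigma[OF x] by (simp add: sI pstar_def fr_SUP_inf)
      also have "\<dots> \<le> I q"
      proof (rule SUP_least)
        fix r assume r: "r \<in> Qp"
        have "inf (inf (I r) (r (up x))) (eQ q (eta x)) = inf (I r) (inf (eQ q (eta x)) (r (up x)))"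
          by (simp add: inf_aci)
        also have "\<dots> \<le> inf (I r) (inf (eQ q (eta x)) (eQ (eta x) r))"
          using up_le_eQ[OF r x] by (intro inf_mono order_refl)
        also have "\<dots> \<le> inf (I r) (eQ q r)" by (intro inf_mono order_refl eQ_trans)
        also have "\<dots> \<le> I q" using I r q by (simp add: Lideal_def Llower_def)
        finally show "inf (inf (I r) (r (up x))) (eQ q (eta x)) \<le> I q" .
      qed
      finally show "inf (inf (p (up x)) (eQ q (eta x))) (eQ p s) \<le> I q" .
    qed
    thus "J p q \<le> limp (eQ p s) (I q)" by (rule limpI)
  qed
qed

lemma Q_cont: "cont_Lordered Qp eQ"
  unfolding cont_Lordered_def
proof (intro conjI ballI Q_ord)
  fix p assume p: "p \<in> Qp"
  show "Ldirected Qp eQ (Lwaybelow Qp eQ p)"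
    using J_ideal[OF p] by (auto simp: Lideal_def intro: Ldirected_cong wbQ[OF p, symmetric])
  show "is_Lsup Qp eQ (Lwaybelow Qp eQ p) p"
    using J_ideal[OF p] by (auto intro: is_Lsup_cong wbQ[OF p, symmetric])
qed

lemma Q_cdcpo: "cont_Ldcpo Qp eQ"
  by (simp add: cont_Ldcpo_def Q_cont Q_dcpo)

end



context cLo begin

lemma f_mono:
  assumes M: "Lorder M eM" and f: "scott_cont P e M eM f" and xy: "x \<in> P" "y \<in> P"
  shows "e x y \<le> eM (f x) (f y)"
proof -
  have fM: "\<And>x. x \<in> P \<Longrightarrow> f x \<in> M" using f by (simp add: scott_cont_def)
  have "is_Lsup M eM (Limg P f (Ldown e y)) (f y)"
    using f down_ideal[OF xy(2)] by (simp add: scott_cont_def Lideal_def)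
  hence "eM (f y) (f y) = (INF x\<in>P. limp (Ldown e y x) (eM (f x) (f y)))"
    using is_Lsup_Limg[of P f M eM "Ldown e y" "f y"] fM xy by simp
  also have "\<dots> \<le> limp (e x y) (eM (f x) (f y))"
    using INF_lower[OF xy(1), of "\<lambda>x. limp (Ldown e y x) (eM (f x) (f y))"] by (simp add: Ldown_def)
  finally show ?thesis using Lorder_refl[OF M fM[OF xy(2)]] by (simp add: top_le_limp)
qed

definition gmap where
  "gmap M eM f p = (THE m. is_Lsup M eM (Limg P f (\<lambda>x. p (up x))) m)"

lemma g_sup:
  assumes M: "Ldcpo M eM" and f: "scott_cont P e M eM f" and p: "p \<in> Qp"
  shows "is_Lsup M eM (Limg P f (\<lambda>x. p (up x))) (gmap M eM f p)"
proof -
  have Mo: "Lorder M eM" using M by (simp add: Ldcpo_def)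
  have fM: "\<And>x. x \<in> P \<Longrightarrow> f x \<in> M" using f by (simp add: scott_cont_def)
  have "Ldirected M eM (Limg P f (\<lambda>x. p (up x)))"
  proof (rule Ldirected_Limg)
    fix x y assume "x \<in> P" "y \<in> P" thus "e x y \<le> eM (f x) (f y)" by (rule f_mono[OF Mo f])
  qed (simp_all add: fM Dp_dir[OF p])
  then obtain m where m: "is_Lsup M eM (Limg P f (\<lambda>x. p (up x))) m" using M by (auto simp: Ldcpo_def)
  show ?thesis unfolding gmap_def
    by (rule theI[of _ m]) (use m Lsup_unique[OF Mo] in blast)+
qed

lemma g_char:
  assumes M: "Ldcpo M eM" and f: "scott_cont P e M eM f" and p: "p \<in> Qp"
  shows "gmap M eM f p \<in> M \<and> (\<forall>m\<in>M. eM (gmap M eM f p) m = (INF x\<in>P. limp (p (up x)) (eM (f x) m)))"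
proof -
  have fM: "\<And>x. x \<in> P \<Longrightarrow> f x \<in> M" using f by (simp add: scott_cont_def)
  show ?thesis using g_sup[OF assms] is_Lsup_Limg[of P f M eM "\<lambda>x. p (up x)" "gmap M eM f p"] fM by simp
qed

lemma g_eta:
  assumes M: "Ldcpo M eM" and f: "scott_cont P e M eM f" and x: "x \<in> P"
  shows "gmap M eM f (eta x) = f x"
proof -
  have Mo: "Lorder M eM" using M by (simp add: Ldcpo_def)
  have 1: "is_Lsup M eM (Limg P f (Lwaybelow P e x)) (f x)"
    using f wb_dir[OF x] wb_sup[OF x] by (simp add: scott_cont_def)
  have "Limg P f (\<lambda>y. eta x (up y)) = Limg P f (Lwaybelow P e x)"
    unfolding Limg_def
    by (rule ext, rule SUP_cong) (simp_all add: eta_app[OF up_sigma] up_in[OF x])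
  hence 2: "is_Lsup M eM (Limg P f (Lwaybelow P e x)) (gmap M eM f (eta x))"
    using g_sup[OF M f eta_in[OF x]] by simp
  show ?thesis using Lsup_unique[OF Mo 2 1] .
qed

lemma g_scott:
  assumes M: "Ldcpo M eM" and f: "scott_cont P e M eM f"
  shows "scott_cont Qp eQ M eM (gmap M eM f)"
  unfolding scott_cont_def
proof (intro conjI allI impI ballI)
  fix p assume "p \<in> Qp" thus "gmap M eM f p \<in> M" using g_char[OF M f] by blast
next
  fix Dd s assume Ds: "Ldirected Qp eQ Dd \<and> is_Lsup Qp eQ Dd s"
  hence Dd: "Ldirected Qp eQ Dd" and s: "is_Lsup Qp eQ Dd s" by auto
  have sQ: "s \<in> Qp" using s by (simp add: is_Lsup_iff)
  have sI: "s = pstar Dd" using Q_sup_eq[OF Dd s] .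
  have gM: "\<And>q. q \<in> Qp \<Longrightarrow> gmap M eM f q \<in> M" using g_char[OF M f] by blast
  have "\<forall>m\<in>M. eM (gmap M eM f s) m = (INF q\<in>Qp. limp (Dd q) (eM (gmap M eM f q) m))"
  proof
    fix m assume m: "m \<in> M"
    have "eM (gmap M eM f s) m = (INF x\<in>P. limp (s (up x)) (eM (f x) m))"
      using g_char[OF M f sQ] m by simp
    also have "\<dots> = (INF x\<in>P. limp (SUP q\<in>Qp. inf (Dd q) (q (up x))) (eM (f x) m))"
      by (rule INF_cong) (simp_all add: sI pstar_def up_sigma)
    also have "\<dots> = (INF x\<in>P. INF q\<in>Qp. limp (Dd q) (limp (q (up x)) (eM (f x) m)))"
      by (simp add: limp_SUP limp_inf)
    also have "\<dots> = (INF q\<in>Qp. INF x\<in>P. limp (Dd q) (limp (q (up x)) (eM (f x) m)))" by (rule INF_commute)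
    also have "\<dots> = (INF q\<in>Qp. limp (Dd q) (eM (gmap M eM f q) m))"
      by (rule INF_cong) (simp_all add: g_char[OF M f] m limp_INF)
    finally show "eM (gmap M eM f s) m = (INF q\<in>Qp. limp (Dd q) (eM (gmap M eM f q) m))" .
  qed
  thus "is_Lsup M eM (Limg Qp (gmap M eM f) Dd) (gmap M eM f s)"
    using is_Lsup_Limg[of Qp "gmap M eM f" M eM Dd "gmap M eM f s"] gM sQ by simp
qed

lemma g_unique:
  assumes M: "Ldcpo M eM" and f: "scott_cont P e M eM f"
    and h: "scott_cont Qp eQ M eM h" and hf: "\<And>x. x \<in> P \<Longrightarrow> h (eta x) = f x"
    and p: "p \<in> Qp"
  shows "h p = gmap M eM f p"
proof -
  have Mo: "Lorder M eM" using M by (simp add: Ldcpo_def)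
  have hM: "\<And>q. q \<in> Qp \<Longrightarrow> h q \<in> M" using h by (simp add: scott_cont_def)
  have "is_Lsup M eM (Limg Qp h (Limg P eta (\<lambda>x. p (up x)))) (h p)"
    using h Dimg_dir[OF p] pt_is_sup[OF p] by (simp add: scott_cont_def)
  hence hc: "\<forall>m\<in>M. eM (h p) m = Lsub Qp (Limg P eta (\<lambda>x. p (up x))) (\<lambda>q. eM (h q) m)"
    using is_Lsup_Limg[of Qp h M eM "Limg P eta (\<lambda>x. p (up x))" "h p"] hM by (simp add: Lsub_def)
  have "\<forall>m\<in>M. eM (h p) m = (INF x\<in>P. limp (p (up x)) (eM (f x) m))"
  proof
    fix m assume m: "m \<in> M"
    have "eM (h p) m = Lsub Qp (Limg P eta (\<lambda>x. p (up x))) (\<lambda>q. eM (h q) m)" using hc m by simp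
    also have "\<dots> = (INF x\<in>P. limp (p (up x)) (eM (h (eta x)) m))" by (rule Lsub_Limg, rule eta_in)
    also have "\<dots> = (INF x\<in>P. limp (p (up x)) (eM (f x) m))" by (simp add: hf)
    finally show "eM (h p) m = (INF x\<in>P. limp (p (up x)) (eM (f x) m))" .
  qed
  thus ?thesis using g_char[OF M f p] hM[OF p] by (intro Lorder_eq_char[OF Mo]) auto
qed

end

theorem theorem6p5:
  fixes P :: "'a set" and e :: "'a \<Rightarrow> 'a \<Rightarrow> 'l::frame"
  assumes "cont_Lordered P e"
  shows "directed_completion P e (ptL P e) (subPt P e) (etaP P e) TYPE('m)"
proof -
  interpret cLo P e using assms by unfold_locales
  show ?thesis unfolding directed_completion_def
  proof (intro conjI Q_cdcpo eta_scott allI impI)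
    fix M :: "'m set" and eM f
    assume Mf: "cont_Ldcpo M eM \<and> scott_cont P e M eM f"
    hence M: "Ldcpo M eM" and f: "scott_cont P e M eM f" by (auto simp: cont_Ldcpo_def)
    show "\<exists>g. scott_cont (ptL P e) (subPt P e) M eM g \<and> (\<forall>x\<in>P. g (etaP P e x) = f x) \<and>
           (\<forall>h. scott_cont (ptL P e) (subPt P e) M eM h \<and> (\<forall>x\<in>P. h (etaP P e x) = f x) \<longrightarrow>
              (\<forall>q\<in>ptL P e. h q = g q))"
      using g_scott[OF M f] g_eta[OF M f] g_unique[OF M f] by blast
  qed
qed

end
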